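(* Let $\mathfrak{s}=\bigoplus\mathfrak{s}^p$ be a grading of depth one of a simple Lie superalgebra. Any graded subalgebra $\mathfrak{s}\subset\mathfrak{g}\subset\mathrm{der}(\mathfrak{s})$ is of the form $\mathfrak{g}=\mathfrak{s}\rtimes F$ for some graded subalgebra $F=\mathfrak{g}\cap\mathrm{out}(\mathfrak{s})$ of $\mathrm{out}(\mathfrak{s})$ and it is a transitive nonlinear $\mathbb{Z}$-graded Lie superalgebra. Moreover it is of depth one and irreducible if and only if the depth $d(F)\leq 0$ (i.e. $F$ is graded in nonnegative degrees).
   Context: $\mathfrak{s}$ is a finite-dimensional complex simple Lie superalgebra, $\mathrm{der}(\mathfrak{s})=\mathfrak{s}\rtimes\mathrm{out}(\mathfrak{s})$ (semidirect sum, $\mathfrak{s}$ the ideal, $\mathrm{out}(\mathfrak{s})$ a subalgebra of outer derivations, stable under the grading), with the grading induced by that of $\mathfrak{s}$. A $\mathbb{Z}$-graded Lie superalgebra $\mathfrak{g}=\bigoplus\mathfrak{g}^p$ is transitive if $x\in\mathfrak{g}^p$, $p\ge0$, $[x,\mathfrak{g}^{-1}]=0$ implies $x=0$; irreducible if $\mathfrak{g}^0$ acts irreducibly on $\mathfrak{g}^{-1}$; nonlinear if $\mathfrak{g}^1\neq0$. *)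

theory Defs
  imports Complex_Main
begin

text \<open>A finite-dimensional complex Lie superalgebra is modelled on a type 'a of class
cvec (the whole type is the superalgebra s), with bracket br, and parity
subspaces V False (even) and V True (odd).\<close>

text \<open>Complex vector spaces (the library only provides real_vector in Complex_Main).\<close>
class cvec = ab_group_add +
  fixes cscale :: "complex \<Rightarrow> 'a \<Rightarrow> 'a" (infixr \<open>*\<^sub>C\<close> 75)
  assumes cscale_right_distrib: "a *\<^sub>C (x + y) = a *\<^sub>C x + a *\<^sub>C y"
    and cscale_left_distrib: "(a + b) *\<^sub>C x = a *\<^sub>C x + b *\<^sub>C x"
    and cscale_cscale: "a *\<^sub>C (b *\<^sub>C x) = (a * b) *\<^sub>C x"
    and cscale_one: "1 *\<^sub>C x = x"

definition psgn :: "bool \<Rightarrow> bool \<Rightarrow> complex" where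
  "psgn a b = (if a \<and> b then -1 else 1)"

definition csubspace :: "'a::cvec set \<Rightarrow> bool" where
  "csubspace A \<longleftrightarrow> 0 \<in> A \<and> (\<forall>x\<in>A. \<forall>y\<in>A. x + y \<in> A) \<and> (\<forall>c. \<forall>x\<in>A. c *\<^sub>C x \<in> A)"

definition clinear_map :: "('a::cvec \<Rightarrow> 'b::cvec) \<Rightarrow> bool" where
  "clinear_map f \<longleftrightarrow> (\<forall>x y. f (x + y) = f x + f y) \<and> (\<forall>c x. f (c *\<^sub>C x) = c *\<^sub>C f x)"

definition fin_dim_C :: "'a::cvec set \<Rightarrow> bool" where
  "fin_dim_C T \<longleftrightarrow> (\<exists>B. finite B \<and> (\<forall>x\<in>T. \<exists>c. x = (\<Sum>b\<in>B. c b *\<^sub>C b)))"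

definition super_decomp :: "(bool \<Rightarrow> 'a::cvec set) \<Rightarrow> bool" where
  "super_decomp V \<longleftrightarrow> csubspace (V False) \<and> csubspace (V True) \<and>
     V False \<inter> V True = {0} \<and> (\<forall>x. \<exists>y\<in>V False. \<exists>z\<in>V True. x = y + z)"

definition par_proj :: "(bool \<Rightarrow> 'a::cvec set) \<Rightarrow> bool \<Rightarrow> 'a \<Rightarrow> 'a" where
  "par_proj V b x = (THE y. y \<in> V b \<and> x - y \<in> V (\<not> b))"

definition lie_superalgebra :: "('a::cvec \<Rightarrow> 'a \<Rightarrow> 'a) \<Rightarrow> (bool \<Rightarrow> 'a set) \<Rightarrow> bool" where
  "lie_superalgebra br V \<longleftrightarrow> super_decomp V \<and>
     (\<forall>x y z. br (x + y) z = br x z + br y z) \<and>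
     (\<forall>c x z. br (c *\<^sub>C x) z = c *\<^sub>C br x z) \<and>
     (\<forall>x y z. br z (x + y) = br z x + br z y) \<and>
     (\<forall>c x z. br z (c *\<^sub>C x) = c *\<^sub>C br z x) \<and>
     (\<forall>a b x y. x \<in> V a \<longrightarrow> y \<in> V b \<longrightarrow> br x y \<in> V (a \<noteq> b)) \<and>
     (\<forall>a b x y. x \<in> V a \<longrightarrow> y \<in> V b \<longrightarrow> br x y = - (psgn a b *\<^sub>C br y x)) \<and>
     (\<forall>a b x y z. x \<in> V a \<longrightarrow> y \<in> V b \<longrightarrow>
        br x (br y z) = br (br x y) z + psgn a b *\<^sub>C br y (br x z))"

definition graded_ideal :: "('a::cvec \<Rightarrow> 'a \<Rightarrow> 'a) \<Rightarrow> (bool \<Rightarrow> 'a set) \<Rightarrow> 'a set \<Rightarrow> bool" where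
  "graded_ideal br V I \<longleftrightarrow> csubspace I \<and> (\<forall>x\<in>I. \<forall>b. par_proj V b x \<in> I) \<and>
     (\<forall>x. \<forall>y\<in>I. br x y \<in> I)"

definition simple_lsa :: "('a::cvec \<Rightarrow> 'a \<Rightarrow> 'a) \<Rightarrow> (bool \<Rightarrow> 'a set) \<Rightarrow> bool" where
  "simple_lsa br V \<longleftrightarrow> lie_superalgebra br V \<and> (\<exists>x y. br x y \<noteq> 0) \<and>
     (\<forall>I. graded_ideal br V I \<longrightarrow> I = {0} \<or> I = UNIV)"

definition z_grading :: "('a::cvec \<Rightarrow> 'a \<Rightarrow> 'a) \<Rightarrow> (bool \<Rightarrow> 'a set) \<Rightarrow> (int \<Rightarrow> 'a set) \<Rightarrow> bool" where
  "z_grading br V S \<longleftrightarrow> (\<forall>p. csubspace (S p)) \<and> finite {p. S p \<noteq> {0}} \<and>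
     (\<forall>x. \<exists>!f. (\<forall>p. f p \<in> S p) \<and> x = sum f {p. S p \<noteq> {0}}) \<and>
     (\<forall>p b x. x \<in> S p \<longrightarrow> par_proj V b x \<in> S p) \<and>
     (\<forall>p q x y. x \<in> S p \<longrightarrow> y \<in> S q \<longrightarrow> br x y \<in> S (p + q))"

definition depth_one :: "(int \<Rightarrow> 'a::cvec set) \<Rightarrow> bool" where
  "depth_one S \<longleftrightarrow> S (-1) \<noteq> {0} \<and> (\<forall>p < -1. S p = {0})"

definition zproj :: "(int \<Rightarrow> 'a::cvec set) \<Rightarrow> int \<Rightarrow> 'a \<Rightarrow> 'a" where
  "zproj S p x = (THE f. (\<forall>q. f q \<in> S q) \<and> x = sum f {q. S q \<noteq> {0}}) p"

definition sder :: "('a::cvec \<Rightarrow> 'a \<Rightarrow> 'a) \<Rightarrow> (bool \<Rightarrow> 'a set) \<Rightarrow> bool \<Rightarrow> ('a \<Rightarrow> 'a) \<Rightarrow> bool" where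
  "sder br V a D \<longleftrightarrow> clinear_map D \<and> (\<forall>b x. x \<in> V b \<longrightarrow> D x \<in> V (a \<noteq> b)) \<and>
     (\<forall>b x y. x \<in> V b \<longrightarrow> D (br x y) = br (D x) y + psgn a b *\<^sub>C br x (D y))"

definition der :: "('a::cvec \<Rightarrow> 'a \<Rightarrow> 'a) \<Rightarrow> (bool \<Rightarrow> 'a set) \<Rightarrow> ('a \<Rightarrow> 'a) set" where
  "der br V = {D. \<exists>D0 D1. sder br V False D0 \<and> sder br V True D1 \<and> D = (\<lambda>x. D0 x + D1 x)}"

definition dpar :: "(bool \<Rightarrow> 'a::cvec set) \<Rightarrow> bool \<Rightarrow> ('a \<Rightarrow> 'a) \<Rightarrow> 'a \<Rightarrow> 'a" where
  "dpar V b D = (\<lambda>x. par_proj V b (D (par_proj V False x)) + par_proj V (\<not> b) (D (par_proj V True x)))"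

text \<open>Supercommutator bracket on der(s), extended bilinearly.\<close>
definition dbr :: "(bool \<Rightarrow> 'a::cvec set) \<Rightarrow> ('a \<Rightarrow> 'a) \<Rightarrow> ('a \<Rightarrow> 'a) \<Rightarrow> 'a \<Rightarrow> 'a" where
  "dbr V D E = (\<lambda>x. \<Sum>(a, b)\<in>(UNIV :: (bool \<times> bool) set).
      dpar V a D (dpar V b E x) - psgn a b *\<^sub>C dpar V b E (dpar V a D x))"

definition dcomp :: "(int \<Rightarrow> 'a::cvec set) \<Rightarrow> int \<Rightarrow> ('a \<Rightarrow> 'a) \<Rightarrow> 'a \<Rightarrow> 'a" where
  "dcomp S k D = (\<lambda>x. \<Sum>p\<in>{p. S p \<noteq> {0}}. zproj S (p + k) (D (zproj S p x)))"

definition der_deg :: "('a::cvec \<Rightarrow> 'a \<Rightarrow> 'a) \<Rightarrow> (bool \<Rightarrow> 'a set) \<Rightarrow> (int \<Rightarrow> 'a set) \<Rightarrow> int \<Rightarrow> ('a \<Rightarrow> 'a) set" where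
  "der_deg br V S k = {D \<in> der br V. \<forall>p. D ` S p \<subseteq> S (p + k)}"

definition fsubspace :: "('a \<Rightarrow> 'b::cvec) set \<Rightarrow> bool" where
  "fsubspace G \<longleftrightarrow> (\<lambda>_. 0) \<in> G \<and> (\<forall>D\<in>G. \<forall>E\<in>G. (\<lambda>x. D x + E x) \<in> G) \<and>
     (\<forall>c. \<forall>D\<in>G. (\<lambda>x. c *\<^sub>C D x) \<in> G)"

definition subalg_der :: "(bool \<Rightarrow> 'a::cvec set) \<Rightarrow> ('a \<Rightarrow> 'a) set \<Rightarrow> bool" where
  "subalg_der V G \<longleftrightarrow> fsubspace G \<and> (\<forall>D\<in>G. \<forall>E\<in>G. dbr V D E \<in> G)"

definition graded_sub :: "(bool \<Rightarrow> 'a::cvec set) \<Rightarrow> (int \<Rightarrow> 'a set) \<Rightarrow> ('a \<Rightarrow> 'a) set \<Rightarrow> bool" where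
  "graded_sub V S G \<longleftrightarrow> (\<forall>D\<in>G. \<forall>k. dcomp S k D \<in> G) \<and> (\<forall>D\<in>G. \<forall>b. dpar V b D \<in> G)"

text \<open>out(s): a graded subalgebra of der(s) complementary to ad(s).\<close>
definition out_complement :: "('a::cvec \<Rightarrow> 'a \<Rightarrow> 'a) \<Rightarrow> (bool \<Rightarrow> 'a set) \<Rightarrow> (int \<Rightarrow> 'a set) \<Rightarrow> ('a \<Rightarrow> 'a) set \<Rightarrow> bool" where
  "out_complement br V S Out \<longleftrightarrow> Out \<subseteq> der br V \<and> subalg_der V Out \<and> graded_sub V S Out \<and>
     (\<forall>D\<in>der br V. \<exists>x. \<exists>E\<in>Out. D = (\<lambda>y. br x y + E y)) \<and>
     (\<forall>x. br x \<in> Out \<longrightarrow> br x = (\<lambda>_. 0))"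

definition gdeg :: "('a::cvec \<Rightarrow> 'a \<Rightarrow> 'a) \<Rightarrow> (bool \<Rightarrow> 'a set) \<Rightarrow> (int \<Rightarrow> 'a set) \<Rightarrow> ('a \<Rightarrow> 'a) set \<Rightarrow> int \<Rightarrow> ('a \<Rightarrow> 'a) set" where
  "gdeg br V S G p = G \<inter> der_deg br V S p"

definition transitive_g :: "('a::cvec \<Rightarrow> 'a \<Rightarrow> 'a) \<Rightarrow> (bool \<Rightarrow> 'a set) \<Rightarrow> (int \<Rightarrow> 'a set) \<Rightarrow> ('a \<Rightarrow> 'a) set \<Rightarrow> bool" where
  "transitive_g br V S G \<longleftrightarrow> (\<forall>p \<ge> 0. \<forall>D\<in>gdeg br V S G p.
     (\<forall>E\<in>gdeg br V S G (-1). dbr V D E = (\<lambda>_. 0)) \<longrightarrow> D = (\<lambda>_. 0))"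

definition nonlinear_g :: "('a::cvec \<Rightarrow> 'a \<Rightarrow> 'a) \<Rightarrow> (bool \<Rightarrow> 'a set) \<Rightarrow> (int \<Rightarrow> 'a set) \<Rightarrow> ('a \<Rightarrow> 'a) set \<Rightarrow> bool" where
  "nonlinear_g br V S G \<longleftrightarrow> gdeg br V S G 1 \<noteq> {\<lambda>_. 0}"

definition depth_one_g :: "('a::cvec \<Rightarrow> 'a \<Rightarrow> 'a) \<Rightarrow> (bool \<Rightarrow> 'a set) \<Rightarrow> (int \<Rightarrow> 'a set) \<Rightarrow> ('a \<Rightarrow> 'a) set \<Rightarrow> bool" where
  "depth_one_g br V S G \<longleftrightarrow> gdeg br V S G (-1) \<noteq> {\<lambda>_. 0} \<and> (\<forall>p < -1. gdeg br V S G p = {\<lambda>_. 0})"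

definition irreducible_g :: "('a::cvec \<Rightarrow> 'a \<Rightarrow> 'a) \<Rightarrow> (bool \<Rightarrow> 'a set) \<Rightarrow> (int \<Rightarrow> 'a set) \<Rightarrow> ('a \<Rightarrow> 'a) set \<Rightarrow> bool" where
  "irreducible_g br V S G \<longleftrightarrow> gdeg br V S G (-1) \<noteq> {\<lambda>_. 0} \<and>
     (\<forall>W. W \<subseteq> gdeg br V S G (-1) \<and> fsubspace W \<and> (\<forall>D\<in>W. \<forall>b. dpar V b D \<in> W) \<and>
        (\<forall>X\<in>gdeg br V S G 0. \<forall>D\<in>W. dbr V X D \<in> W) \<longrightarrow>
        W = {\<lambda>_. 0} \<or> W = gdeg br V S G (-1))"

end

theory Submission
  imports Defs
begin

lemma cscale_zero_left[simp]: "(0::complex) *\<^sub>C x = (0::'a::cvec)"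
proof -
  have "0 *\<^sub>C x + 0 *\<^sub>C x = (0 *\<^sub>C x :: 'a)" using cscale_left_distrib[of 0 0 x] by simp
  then show ?thesis by simp
qed

lemma cscale_zero_right[simp]: "c *\<^sub>C (0::'a::cvec) = 0"
proof -
  have "c *\<^sub>C 0 + c *\<^sub>C 0 = (c *\<^sub>C 0 :: 'a)" using cscale_right_distrib[of c 0 0] by simp
  then show ?thesis by simp
qed

lemma cscale_minus_left: "(- c) *\<^sub>C x = - (c *\<^sub>C (x::'a::cvec))"
proof -
  have "c *\<^sub>C x + (-c) *\<^sub>C x = 0" using cscale_left_distrib[of c "-c" x] by simp
  then show ?thesis by (simp add: eq_neg_iff_add_eq_0 add.commute)
qed

lemma cscale_minus_right: "c *\<^sub>C (- x) = - (c *\<^sub>C (x::'a::cvec))"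
proof -
  have "c *\<^sub>C x + c *\<^sub>C (-x) = 0" using cscale_right_distrib[of c x "-x"] by simp
  then show ?thesis by (simp add: eq_neg_iff_add_eq_0 add.commute)
qed

lemma cscale_diff_right: "c *\<^sub>C (x - y) = c *\<^sub>C x - c *\<^sub>C (y::'a::cvec)"
proof -
  have "c *\<^sub>C (x + - y) = c *\<^sub>C x + c *\<^sub>C (- y)" by (rule cscale_right_distrib)
  then show ?thesis by (simp add: cscale_minus_right)
qed

lemma cscale_m1: "(-1) *\<^sub>C x = - (x::'a::cvec)"
  by (simp add: cscale_minus_left cscale_one)

lemma cscale_sum: "c *\<^sub>C sum f A = (\<Sum>i\<in>A. c *\<^sub>C (f i :: 'a::cvec))"
  by (induct A rule: infinite_finite_induct) (simp_all add: cscale_right_distrib)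

lemma psgn_sq: "psgn a b * psgn a b = 1" by (simp add: psgn_def)

lemma psgn_cancel: "psgn a b *\<^sub>C (x::'a::cvec) = 0 \<Longrightarrow> x = 0"
proof -
  assume "psgn a b *\<^sub>C x = 0"
  then have "psgn a b *\<^sub>C (psgn a b *\<^sub>C x) = 0" by simp
  then show ?thesis by (simp add: cscale_cscale psgn_sq cscale_one)
qed

lemma sumUB: "(\<Sum>(a,b)\<in>(UNIV::(bool\<times>bool) set). f a b) = f False False + f False True + f True False + (f True True :: 'a::ab_group_add)"
proof -
  have "(UNIV::(bool\<times>bool) set) = {(False,False),(False,True),(True,False),(True,True)}"
    by auto
  show ?thesis unfolding \<open>UNIV = _\<close> by (simp add: algebra_simps)
qed

lemma csub_add: "csubspace A \<Longrightarrow> x \<in> A \<Longrightarrow> y \<in> A \<Longrightarrow> x + y \<in> A" by (simp add: csubspace_def)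
lemma csub_scale: "csubspace A \<Longrightarrow> x \<in> A \<Longrightarrow> c *\<^sub>C x \<in> A" by (simp add: csubspace_def)
lemma csub_0: "csubspace A \<Longrightarrow> 0 \<in> A" by (simp add: csubspace_def)
lemma csub_minus: "csubspace A \<Longrightarrow> x \<in> A \<Longrightarrow> - x \<in> A"
  using csub_scale[of A x "-1"] by (simp add: cscale_m1)
lemma csub_diff: "csubspace A \<Longrightarrow> x \<in> A \<Longrightarrow> y \<in> A \<Longrightarrow> x - y \<in> A"
  using csub_add[of A x "-y"] csub_minus by fastforce
lemma csub_sum: "csubspace A \<Longrightarrow> (\<And>i. i \<in> I \<Longrightarrow> f i \<in> A) \<Longrightarrow> sum f I \<in> A"
  by (induct I rule: infinite_finite_induct) (auto simp: csub_0 csub_add)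

lemma clin_add: "clinear_map f \<Longrightarrow> f (x + y) = f x + f y" by (simp add: clinear_map_def)
lemma clin_scale: "clinear_map f \<Longrightarrow> f (c *\<^sub>C x) = c *\<^sub>C f x" by (simp add: clinear_map_def)
lemma clin_0: "clinear_map f \<Longrightarrow> f 0 = 0"
  using clin_scale[of f 0 0] by simp
lemma clin_sum: "clinear_map f \<Longrightarrow> f (sum g A) = (\<Sum>i\<in>A. f (g i))"
  by (induct A rule: infinite_finite_induct) (simp_all add: clin_0 clin_add)

inductive_set gen :: "('a::cvec \<Rightarrow> 'a \<Rightarrow> 'a) \<Rightarrow> (int \<Rightarrow> 'a set) \<Rightarrow> 'a set \<Rightarrow> 'a set"
  for br S X where
  gbase: "x \<in> X \<Longrightarrow> x \<in> gen br S X"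
| gzero: "0 \<in> gen br S X"
| gadd: "a \<in> gen br S X \<Longrightarrow> b \<in> gen br S X \<Longrightarrow> a + b \<in> gen br S X"
| gscale: "a \<in> gen br S X \<Longrightarrow> c *\<^sub>C a \<in> gen br S X"
| gbr: "a \<in> gen br S X \<Longrightarrow> u \<in> S q \<Longrightarrow> 0 \<le> q \<Longrightarrow> br u a \<in> gen br S X"

lemma gen_sum: "(\<And>i. i \<in> I \<Longrightarrow> f i \<in> gen br S X) \<Longrightarrow> sum f I \<in> gen br S X"
  by (induct I rule: infinite_finite_induct) (auto intro: gen.intros)

locale LS =
  fixes br :: "'a::cvec \<Rightarrow> 'a \<Rightarrow> 'a" and V :: "bool \<Rightarrow> 'a set" and S :: "int \<Rightarrow> 'a set"
  assumes lsa: "lie_superalgebra br V" and simpl: "simple_lsa br V"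
    and zg: "z_grading br V S" and d1: "depth_one S"
begin

abbreviation pp :: "bool \<Rightarrow> 'a \<Rightarrow> 'a" where "pp b x \<equiv> par_proj V b x"

lemma sd: "super_decomp V" using lsa unfolding lie_superalgebra_def by (elim conjE) assumption
lemma Vsub: "csubspace (V b)" using sd by (cases b) (auto simp: super_decomp_def)
lemma V0: "0 \<in> V b" by (rule csub_0[OF Vsub])
lemma Vdisj: "x \<in> V b \<Longrightarrow> x \<in> V (\<not> b) \<Longrightarrow> x = 0"
  using sd by (cases b) (auto simp: super_decomp_def)
lemma Vdec: "\<exists>y\<in>V False. \<exists>z\<in>V True. x = y + z" using sd by (auto simp: super_decomp_def)

lemma par_char: assumes "y \<in> V b" "x - y \<in> V (\<not> b)" shows "pp b x = y"
  unfolding par_proj_def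
proof (rule the_equality)
  show "y \<in> V b \<and> x - y \<in> V (\<not> b)" using assms by simp
  fix y' assume h: "y' \<in> V b \<and> x - y' \<in> V (\<not> b)"
  have h1: "y' \<in> V b" "x - y' \<in> V (\<not> b)" using h by auto
  have a: "y' - y \<in> V b" by (rule csub_diff[OF Vsub h1(1) assms(1)])
  have b: "(x - y) - (x - y') \<in> V (\<not> b)" by (rule csub_diff[OF Vsub assms(2) h1(2)])
  have eq: "(x - y) - (x - y') = y' - y" by (simp add: algebra_simps)
  have "y' - y = 0" using Vdisj[OF a] b eq by simp
  then show "y' = y" by simp
qed

lemma par_ex: "\<exists>y. y \<in> V b \<and> x - y \<in> V (\<not> b)"
proof -
  obtain y z where "y \<in> V False" "z \<in> V True" "x = y + z" using Vdec by blast
  show ?thesis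
  proof (cases b)
    case True then show ?thesis using \<open>z \<in> V True\<close> \<open>y \<in> V False\<close> \<open>x = y + z\<close> by (intro exI[of _ z]) simp
  next
    case False then show ?thesis using \<open>z \<in> V True\<close> \<open>y \<in> V False\<close> \<open>x = y + z\<close> by (intro exI[of _ y]) simp
  qed
qed

lemma par_in_rest: "pp b x \<in> V b \<and> x - pp b x \<in> V (\<not> b)"
proof -
  obtain y where y: "y \<in> V b" "x - y \<in> V (\<not> b)" using par_ex by blast
  then have "pp b x = y" by (rule par_char)
  then show ?thesis using y by simp
qed
lemma par_in: "pp b x \<in> V b" using par_in_rest by blast
lemma par_rest: "x - pp b x \<in> V (\<not> b)" using par_in_rest by blast
lemma par_sum: "pp False x + pp True x = x"
proof -
  have "pp True x = x - pp False x"
    by (rule par_char) (use par_rest[where b=False and x=x] par_in[where b=False and x=x] in auto)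
  then show ?thesis by simp
qed
lemma par_id: "x \<in> V b \<Longrightarrow> pp b x = x" by (rule par_char) (auto simp: V0)
lemma par_zero: "x \<in> V b \<Longrightarrow> pp (\<not> b) x = 0" by (rule par_char) (auto simp: V0)
lemma par_zero': "x \<in> V (\<not> b) \<Longrightarrow> pp b x = 0" using par_zero[of x "\<not> b"] by simp
lemma par_add: "pp b (x + y) = pp b x + pp b y"
proof (rule par_char)
  show "pp b x + pp b y \<in> V b" by (rule csub_add[OF Vsub par_in par_in])
  have eq: "x + y - (pp b x + pp b y) = (x - pp b x) + (y - pp b y)" by simp
  show "x + y - (pp b x + pp b y) \<in> V (\<not> b)" unfolding eq by (rule csub_add[OF Vsub par_rest par_rest])
qed
lemma par_scale: "pp b (c *\<^sub>C x) = c *\<^sub>C pp b x"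
proof (rule par_char)
  show "c *\<^sub>C pp b x \<in> V b" by (rule csub_scale[OF Vsub par_in])
  have eq: "c *\<^sub>C x - c *\<^sub>C pp b x = c *\<^sub>C (x - pp b x)"
    by (rule cscale_diff_right[symmetric])
  show "c *\<^sub>C x - c *\<^sub>C pp b x \<in> V (\<not> b)" unfolding eq by (rule csub_scale[OF Vsub par_rest])
qed
lemma par_0: "pp b 0 = 0" using par_id[of 0 "\<not> b"] par_zero'[of 0 b] V0 by simp
lemma par_sumf: "pp b (sum f A) = (\<Sum>i\<in>A. pp b (f i))"
  by (induct A rule: infinite_finite_induct) (simp_all add: par_0 par_add)
lemma disj_sum: assumes a3: "y + z = 0" and a1: "y \<in> V b" and a2: "z \<in> V (\<not> b)" shows "y = 0 \<and> z = 0"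
proof -
  have "y = - z" using a3 by (simp add: eq_neg_iff_add_eq_0)
  then have "y \<in> V (\<not> b)" using csub_minus[OF Vsub a2] by simp
  then have "y = 0" by (rule Vdisj[OF a1])
  then show ?thesis using a3 by simp
qed

lemma br_addL: "br (x + y) z = br x z + br y z"
proof -
  have H: "\<forall>x y z. br (x + y) z = br x z + br y z" using lsa unfolding lie_superalgebra_def by (elim conjE) assumption
  show ?thesis using H[rule_format] .
qed
lemma br_addR: "br z (x + y) = br z x + br z y"
proof -
  have H: "\<forall>x y z. br z (x + y) = br z x + br z y" using lsa unfolding lie_superalgebra_def by (elim conjE) assumption
  show ?thesis using H[rule_format] .
qed
lemma br_scaleL: "br (c *\<^sub>C x) z = c *\<^sub>C br x z"
proof -
  have H: "\<forall>c x z. br (c *\<^sub>C x) z = c *\<^sub>C br x z" using lsa unfolding lie_superalgebra_def by (elim conjE) assumption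
  show ?thesis using H[rule_format] .
qed
lemma br_scaleR: "br z (c *\<^sub>C x) = c *\<^sub>C br z x"
proof -
  have H: "\<forall>c x z. br z (c *\<^sub>C x) = c *\<^sub>C br z x" using lsa unfolding lie_superalgebra_def by (elim conjE) assumption
  show ?thesis using H[rule_format] .
qed
lemma br_0L[simp]: "br 0 z = 0" using br_scaleL[of 0 0 z] by simp
lemma br_0R[simp]: "br z 0 = 0" using br_scaleR[of z 0 0] by simp
lemma br_sumL: "br (sum f A) z = (\<Sum>i\<in>A. br (f i) z)"
  by (induct A rule: infinite_finite_induct) (simp_all add: br_addL)
lemma br_sumR: "br z (sum f A) = (\<Sum>i\<in>A. br z (f i))"
  by (induct A rule: infinite_finite_induct) (simp_all add: br_addR)
lemma br_par: assumes "x \<in> V a" "y \<in> V b" shows "br x y \<in> V (a \<noteq> b)"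
proof -
  have H: "\<forall>a b x y. x \<in> V a \<longrightarrow> y \<in> V b \<longrightarrow> br x y \<in> V (a \<noteq> b)"
    using lsa unfolding lie_superalgebra_def by (elim conjE) assumption
  show ?thesis using H[rule_format, OF assms] .
qed
lemma br_anti: assumes "x \<in> V a" "y \<in> V b" shows "br x y = - (psgn a b *\<^sub>C br y x)"
proof -
  have H: "\<forall>a b x y. x \<in> V a \<longrightarrow> y \<in> V b \<longrightarrow> br x y = - (psgn a b *\<^sub>C br y x)"
    using lsa unfolding lie_superalgebra_def by (elim conjE) assumption
  show ?thesis using H[rule_format, OF assms] .
qed
lemma jacobi: assumes "x \<in> V a" "y \<in> V b" shows "br x (br y z) = br (br x y) z + psgn a b *\<^sub>C br y (br x z)"
proof -
  have H: "\<forall>a b x y z. x \<in> V a \<longrightarrow> y \<in> V b \<longrightarrow> br x (br y z) = br (br x y) z + psgn a b *\<^sub>C br y (br x z)"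
    using lsa unfolding lie_superalgebra_def by (elim conjE) assumption
  show ?thesis using H[rule_format, OF assms] .
qed
lemma br_splitL: "br x y = br (pp False x) y + br (pp True x) y"
proof -
  have "br (pp False x + pp True x) y = br (pp False x) y + br (pp True x) y" by (rule br_addL)
  then show ?thesis by (simp only: par_sum)
qed
lemma br_splitR: "br x y = br x (pp False y) + br x (pp True y)"
proof -
  have "br x (pp False y + pp True y) = br x (pp False y) + br x (pp True y)" by (rule br_addR)
  then show ?thesis by (simp only: par_sum)
qed
lemma br_split: "br x y = br (pp False x) (pp False y) + br (pp False x) (pp True y)
   + br (pp True x) (pp False y) + br (pp True x) (pp True y)"
proof -
  have "br x y = (br (pp False x) (pp False y) + br (pp False x) (pp True y))
   + (br (pp True x) (pp False y) + br (pp True x) (pp True y))"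
    by (rule trans[OF br_splitL], intro arg_cong2[where f="(+)"] br_splitR)
  then show ?thesis by (simp only: add.assoc)
qed

definition PP where "PP = {p. S p \<noteq> {0}}"
lemma Ssub: "csubspace (S p)"
proof -
  have H: "\<forall>p. csubspace (S p)" using zg unfolding z_grading_def by (elim conjE) assumption
  show ?thesis using H by (rule spec)
qed
lemma S0: "0 \<in> S p" by (rule csub_0[OF Ssub])
lemma finPP: "finite PP" using zg unfolding z_grading_def PP_def by (elim conjE) assumption
lemma Sdec: "\<exists>!f. (\<forall>p. f p \<in> S p) \<and> x = sum f PP"
proof -
  have H: "\<forall>x. \<exists>!f. (\<forall>p. f p \<in> S p) \<and> x = sum f PP" using zg unfolding z_grading_def PP_def by (elim conjE) assumption
  show ?thesis using H by (rule spec)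
qed
lemma S_par: assumes "x \<in> S p" shows "pp b x \<in> S p"
proof -
  have H: "\<forall>p b x. x \<in> S p \<longrightarrow> pp b x \<in> S p" using zg unfolding z_grading_def by (elim conjE) assumption
  show ?thesis using H[rule_format, OF assms] .
qed
lemma br_grade: assumes "x \<in> S p" "y \<in> S q" shows "br x y \<in> S (p + q)"
proof -
  have H: "\<forall>p q x y. x \<in> S p \<longrightarrow> y \<in> S q \<longrightarrow> br x y \<in> S (p + q)" using zg unfolding z_grading_def by (elim conjE) assumption
  show ?thesis using H[rule_format, OF assms] .
qed
lemma notPP: "p \<notin> PP \<Longrightarrow> x \<in> S p \<Longrightarrow> x = 0" unfolding PP_def by auto
lemma Slow: "p < -1 \<Longrightarrow> x \<in> S p \<Longrightarrow> x = 0" using d1 unfolding depth_one_def by auto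
lemma Sm1: "S (-1) \<noteq> {0}" using d1 unfolding depth_one_def by auto

lemma zp_def': "zproj S p x = (THE f. (\<forall>p. f p \<in> S p) \<and> x = sum f PP) p"
  unfolding zproj_def PP_def by simp

lemma zp_char: assumes "\<forall>p. f p \<in> S p" "x = sum f PP" shows "zproj S p x = f p"
proof -
  have "(THE f. (\<forall>p. f p \<in> S p) \<and> x = sum f PP) = f"
    by (rule the1_equality[OF Sdec]) (use assms in simp)
  then show ?thesis by (simp add: zp_def')
qed

lemma zp_in_sum: "(\<forall>p. zproj S p x \<in> S p) \<and> x = sum (\<lambda>p. zproj S p x) PP"
proof -
  obtain f where f: "\<forall>p. f p \<in> S p" "x = sum f PP" using Sdec by blast
  then have "\<And>p. zproj S p x = f p" by (rule zp_char)
  then show ?thesis using f by simp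
qed
lemma zp_in: "zproj S p x \<in> S p" using zp_in_sum by blast
lemma zp_sum: "sum (\<lambda>p. zproj S p x) PP = x" using zp_in_sum by metis

lemma zp_hom: assumes "x \<in> S q" shows "zproj S p x = (if p = q then x else 0)"
proof (rule zp_char)
  show "\<forall>p. (if p = q then x else 0) \<in> S p" using assms S0 by simp
  have "sum (\<lambda>p. if p = q then x else 0) PP = (if q \<in> PP then x else 0)"
    using finPP by (simp add: sum.delta)
  also have "\<dots> = x" using notPP assms by auto
  finally show "x = sum (\<lambda>p. if p = q then x else 0) PP" by simp
qed
lemma zp_same: "x \<in> S p \<Longrightarrow> zproj S p x = x" using zp_hom by simp
lemma zp_other: "x \<in> S q \<Longrightarrow> p \<noteq> q \<Longrightarrow> zproj S p x = 0" using zp_hom by simp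
lemma zp_0: "zproj S p 0 = 0" using zp_hom[OF S0[of 0]] by simp

lemma zp_add: "zproj S p (x + y) = zproj S p x + zproj S p y"
proof (rule zp_char)
  show "\<forall>p. zproj S p x + zproj S p y \<in> S p" by (intro allI csub_add[OF Ssub zp_in zp_in])
  show "x + y = (\<Sum>p\<in>PP. zproj S p x + zproj S p y)" by (simp add: sum.distrib zp_sum)
qed
lemma zp_scale: "zproj S p (c *\<^sub>C x) = c *\<^sub>C zproj S p x"
proof (rule zp_char)
  show "\<forall>p. c *\<^sub>C zproj S p x \<in> S p" by (intro allI csub_scale[OF Ssub zp_in])
  show "c *\<^sub>C x = (\<Sum>p\<in>PP. c *\<^sub>C zproj S p x)" by (simp add: cscale_sum[symmetric] zp_sum)
qed
lemma zp_sumf: "zproj S p (sum g A) = (\<Sum>i\<in>A. zproj S p (g i))"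
  by (induct A rule: infinite_finite_induct) (simp_all add: zp_0 zp_add)
lemma zp_par: "zproj S p (pp b x) = pp b (zproj S p x)"
proof (rule zp_char)
  show "\<forall>p. pp b (zproj S p x) \<in> S p" using zp_in S_par by blast
  show "pp b x = (\<Sum>p\<in>PP. pp b (zproj S p x))" by (simp add: par_sumf[symmetric] zp_sum)
qed
lemma zp_low: "p < -1 \<Longrightarrow> zproj S p x = 0" using Slow zp_in by blast

lemma zp_brL: assumes "u \<in> S q" shows "zproj S r (br u a) = br u (zproj S (r - q) a)"
proof -
  have e1: "br u a = (\<Sum>s\<in>PP. br u (zproj S s a))"
  proof -
    have "br u (sum (\<lambda>s. zproj S s a) PP) = (\<Sum>s\<in>PP. br u (zproj S s a))" by (rule br_sumR)
    then show ?thesis by (simp only: zp_sum)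
  qed
  have "zproj S r (br u a) = (\<Sum>s\<in>PP. zproj S r (br u (zproj S s a)))"
    by (subst e1) (rule zp_sumf)
  also have "\<dots> = (\<Sum>s\<in>PP. if s = r - q then br u (zproj S s a) else 0)"
  proof (rule sum.cong[OF refl])
    fix s
    have m: "br u (zproj S s a) \<in> S (q + s)" using br_grade[OF assms zp_in] .
    show "zproj S r (br u (zproj S s a)) = (if s = r - q then br u (zproj S s a) else 0)"
    proof (cases "s = r - q")
      case True then have "r = q + s" by simp
      then show ?thesis using zp_same[OF m] True by simp
    next
      case False then have "r \<noteq> q + s" by simp
      then show ?thesis using zp_other[OF m] False by simp
    qed
  qed
  also have "\<dots> = (if r - q \<in> PP then br u (zproj S (r - q) a) else 0)"
    by (rule sum.delta[OF finPP])
  also have "\<dots> = br u (zproj S (r - q) a)"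
  proof (cases "r - q \<in> PP")
    case False then have "zproj S (r - q) a = 0" by (rule notPP[OF _ zp_in])
    then show ?thesis using False by simp
  qed simp
  finally show ?thesis .
qed

lemma zp_brR: assumes "v \<in> S q" shows "zproj S r (br a v) = br (zproj S (r - q) a) v"
proof -
  have e1: "br a v = (\<Sum>s\<in>PP. br (zproj S s a) v)"
  proof -
    have "br (sum (\<lambda>s. zproj S s a) PP) v = (\<Sum>s\<in>PP. br (zproj S s a) v)" by (rule br_sumL)
    then show ?thesis by (simp only: zp_sum)
  qed
  have "zproj S r (br a v) = (\<Sum>s\<in>PP. zproj S r (br (zproj S s a) v))"
    by (subst e1) (rule zp_sumf)
  also have "\<dots> = (\<Sum>s\<in>PP. if s = r - q then br (zproj S s a) v else 0)"
  proof (rule sum.cong[OF refl])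
    fix s
    have m: "br (zproj S s a) v \<in> S (s + q)" using br_grade[OF zp_in assms] .
    show "zproj S r (br (zproj S s a) v) = (if s = r - q then br (zproj S s a) v else 0)"
    proof (cases "s = r - q")
      case True then have "r = s + q" by simp
      then show ?thesis using zp_same[OF m] True by simp
    next
      case False then have "r \<noteq> s + q" by simp
      then show ?thesis using zp_other[OF m] False by simp
    qed
  qed
  also have "\<dots> = (if r - q \<in> PP then br (zproj S (r - q) a) v else 0)"
    by (rule sum.delta[OF finPP])
  also have "\<dots> = br (zproj S (r - q) a) v"
  proof (cases "r - q \<in> PP")
    case False then have "zproj S (r - q) a = 0" by (rule notPP[OF _ zp_in])
    then show ?thesis using False by simp
  qed simp
  finally show ?thesis .
qed


lemma simple_ideal: assumes "graded_ideal br V I" shows "I = {0} \<or> I = UNIV"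
proof -
  have H: "\<forall>I. graded_ideal br V I \<longrightarrow> I = {0} \<or> I = UNIV" using simpl unfolding simple_lsa_def by (elim conjE) assumption
  show ?thesis using H[rule_format, OF assms] .
qed
lemma nonab: "\<exists>x y. br x y \<noteq> 0" using simpl unfolding simple_lsa_def by (elim conjE) assumption

lemma center: assumes "\<forall>x. br z x = 0" shows "z = 0"
proof -
  define Z where "Z = {z. \<forall>x. br z x = 0}"
  have Zpar: "pp b w \<in> Z" if "w \<in> Z" for w b
  proof -
    have comp: "br (pp b w) (pp c x) = 0" for c x
    proof -
      have "br (pp False w) (pp c x) + br (pp True w) (pp c x) = 0"
        using that br_splitL[of w "pp c x"] unfolding Z_def by simp
      moreover have "br (pp False w) (pp c x) \<in> V (False \<noteq> c)" by (rule br_par[OF par_in par_in])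
      moreover have "br (pp True w) (pp c x) \<in> V (\<not> (False \<noteq> c))" using br_par[OF par_in par_in, of True w c x] by simp
      ultimately have "br (pp False w) (pp c x) = 0 \<and> br (pp True w) (pp c x) = 0" by (rule disj_sum)
      then show ?thesis by (cases b) auto
    qed
    show ?thesis unfolding Z_def
    proof (intro CollectI allI)
      fix x show "br (pp b w) x = 0" using br_splitR[of "pp b w" x] comp[of False x] comp[of True x] by simp
    qed
  qed
  have Zleft: "br x w = 0" if "w \<in> Z" for w x
  proof -
    have t: "br (pp a x) (pp b w) = 0" for a b
    proof -
      have "br (pp b w) (pp a x) = 0" using Zpar[OF that] unfolding Z_def by simp
      then show ?thesis using br_anti[OF par_in par_in, of a x b w] by simp
    qed
    show ?thesis using br_split[of x w] t by simp
  qed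
  have "graded_ideal br V Z"
    unfolding graded_ideal_def csubspace_def
  proof (intro conjI ballI allI)
    show "0 \<in> Z" unfolding Z_def by simp
    show "x + y \<in> Z" if "x \<in> Z" "y \<in> Z" for x y using that unfolding Z_def by (simp add: br_addL)
    show "c *\<^sub>C x \<in> Z" if "x \<in> Z" for c x using that unfolding Z_def by (simp add: br_scaleL)
    show "pp b x \<in> Z" if "x \<in> Z" for x b using Zpar that by blast
    show "br x y \<in> Z" if "y \<in> Z" for x y using Zleft[OF that] unfolding Z_def by simp
  qed
  then have "Z = {0} \<or> Z = UNIV" by (rule simple_ideal)
  moreover have "Z \<noteq> UNIV" using nonab unfolding Z_def by auto
  ultimately show ?thesis using assms unfolding Z_def by auto
qed

lemma center': "br z = (\<lambda>_. 0) \<Longrightarrow> z = 0" using center by (metis)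

lemma sder_clin: "sder br V a D \<Longrightarrow> clinear_map D" unfolding sder_def by (elim conjE) assumption
lemma sder_par: assumes "sder br V a D" "x \<in> V b" shows "D x \<in> V (a \<noteq> b)"
proof -
  have H: "\<forall>b x. x \<in> V b \<longrightarrow> D x \<in> V (a \<noteq> b)" using assms(1) unfolding sder_def by (elim conjE) assumption
  show ?thesis using H[rule_format, OF assms(2)] .
qed
lemma sder_rule: assumes "sder br V a D" "x \<in> V b" shows "D (br x y) = br (D x) y + psgn a b *\<^sub>C br x (D y)"
proof -
  have H: "\<forall>b x y. x \<in> V b \<longrightarrow> D (br x y) = br (D x) y + psgn a b *\<^sub>C br x (D y)" using assms(1) unfolding sder_def by (elim conjE) assumption
  show ?thesis using H[rule_format, OF assms(2)] .
qed

lemma ad_sder: assumes "y \<in> V a" shows "sder br V a (br y)"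
  unfolding sder_def clinear_map_def
  using br_addR br_scaleR br_par[OF assms] jacobi[OF assms] by blast

lemma ad_der: "br y \<in> der br V"
  unfolding der_def
  using ad_sder[OF par_in, of False y] ad_sder[OF par_in, of True y] br_splitL[of y] by blast

lemma dpar_der: assumes "sder br V False D0" "sder br V True D1"
  shows "dpar V a (\<lambda>x. D0 x + D1 x) = (if a then D1 else D0)"
proof
  fix x
  let ?x0 = "pp False x" and ?x1 = "pp True x"
  have a: "D0 ?x0 \<in> V False" using sder_par[OF assms(1) par_in, of False x] by simp
  have b: "D1 ?x0 \<in> V True" using sder_par[OF assms(2) par_in, of False x] by simp
  have c: "D0 ?x1 \<in> V True" using sder_par[OF assms(1) par_in, of True x] by simp
  have d: "D1 ?x1 \<in> V False" using sder_par[OF assms(2) par_in, of True x] by simp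
  have e0: "D0 ?x0 + D0 ?x1 = D0 x" using clin_add[OF sder_clin[OF assms(1)], of ?x0 ?x1] by (simp only: par_sum)
  have e1: "D1 ?x0 + D1 ?x1 = D1 x" using clin_add[OF sder_clin[OF assms(2)], of ?x0 ?x1] by (simp only: par_sum)
  show "dpar V a (\<lambda>x. D0 x + D1 x) x = (if a then D1 else D0) x"
  proof (cases a)
    case True
    then show ?thesis unfolding dpar_def
      using a b c d e1 by (simp add: par_add par_id par_zero')
  next
    case False
    then show ?thesis unfolding dpar_def
      using a b c d e0 by (simp add: par_add par_id par_zero')
  qed
qed

lemma der_obtain: assumes "D \<in> der br V"
  obtains D0 D1 where "sder br V False D0" "sder br V True D1" "D = (\<lambda>x. D0 x + D1 x)"
  using assms unfolding der_def by blast

lemma der_clin: assumes "D \<in> der br V" shows "clinear_map D"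
proof -
  obtain D0 D1 where h: "sder br V False D0" "sder br V True D1" "D = (\<lambda>x. D0 x + D1 x)"
    using der_obtain[OF assms] by blast
  have "clinear_map D0" "clinear_map D1" using h sder_clin by blast+
  then show ?thesis unfolding h(3) clinear_map_def by (simp add: cscale_right_distrib algebra_simps)
qed

lemma dpar_ad: "dpar V b (br y) = br (pp b y)"
proof -
  have "br y = (\<lambda>x. br (pp False y) x + br (pp True y) x)" by (rule ext) (rule br_splitL)
  then have "dpar V b (br y) = (if b then br (pp True y) else br (pp False y))"
    using dpar_der[OF ad_sder[OF par_in] ad_sder[OF par_in]] by simp
  then show ?thesis by (cases b) auto
qed

lemma dbr_ad: assumes "D \<in> der br V" shows "dbr V D (br y) = br (D y)"
proof
  fix x
  obtain D0 D1 where h: "sder br V False D0" "sder br V True D1" "D = (\<lambda>x. D0 x + D1 x)"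
    using der_obtain[OF assms] by blast
  define Dc where "Dc a = (if a then D1 else D0)" for a
  have sd: "sder br V a (Dc a)" for a using h unfolding Dc_def by (cases a) auto
  have dp: "dpar V a D = Dc a" for a using dpar_der[OF h(1,2)] h(3) unfolding Dc_def by simp
  have trm: "Dc a (br (pp b y) x) - psgn a b *\<^sub>C br (pp b y) (Dc a x) = br (Dc a (pp b y)) x" for a b
    using sder_rule[OF sd par_in, of a b y x] by simp
  have "dbr V D (br y) x = (\<Sum>(a,b)\<in>(UNIV::(bool\<times>bool) set). Dc a (br (pp b y) x) - psgn a b *\<^sub>C br (pp b y) (Dc a x))"
    unfolding dbr_def dp dpar_ad ..
  also have "\<dots> = (\<Sum>(a,b)\<in>(UNIV::(bool\<times>bool) set). br (Dc a (pp b y)) x)"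
    unfolding trm ..
  also have "\<dots> = br (Dc False (pp False y)) x + br (Dc False (pp True y)) x + br (Dc True (pp False y)) x + br (Dc True (pp True y)) x"
    by (rule sumUB)
  also have "\<dots> = br ((Dc False (pp False y) + Dc False (pp True y)) + (Dc True (pp False y) + Dc True (pp True y))) x"
    by (simp only: br_addL add.assoc)
  also have "(Dc False (pp False y) + Dc False (pp True y)) + (Dc True (pp False y) + Dc True (pp True y)) = D y"
  proof -
    have e: "Dc a (pp False y) + Dc a (pp True y) = Dc a y" for a
      using clin_add[OF sder_clin[OF sd], of a "pp False y" "pp True y"] by (simp only: par_sum)
    have "D y = Dc False y + Dc True y" using h(3) unfolding Dc_def by simp
    then show ?thesis by (simp only: e)
  qed
  finally show "dbr V D (br y) x = br (D y) x" .
qed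

lemma gen_m1:
  assumes H1: "\<forall>x\<in>X. \<forall>y\<in>S (-1). br y x \<in> gen br S X"
  shows "a \<in> gen br S X \<Longrightarrow> \<forall>y\<in>S (-1). br y a \<in> gen br S X"
proof (induct a rule: gen.induct)
  case (gbase x) then show ?case using H1 by blast
next
  case gzero then show ?case by (simp add: gen.gzero)
next
  case (gadd a b) then show ?case by (simp add: br_addR gen.gadd)
next
  case (gscale a c) then show ?case by (simp add: br_scaleR gen.gscale)
next
  case (gbr a u q)
  show ?case
  proof
    fix y assume y: "y \<in> S (-1)"
    have hom: "br (pp c y) (br (pp d u) a) \<in> gen br S X" for c d
    proof -
      have yc: "pp c y \<in> S (-1)" using S_par[OF y] .
      have ud: "pp d u \<in> S q" using S_par[OF gbr(3)] .
      have j: "br (pp c y) (br (pp d u) a) = br (br (pp c y) (pp d u)) a + psgn c d *\<^sub>C br (pp d u) (br (pp c y) a)"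
        by (rule jacobi[OF par_in par_in])
      have w: "br (pp c y) (pp d u) \<in> S (-1 + q)" using br_grade[OF yc ud] .
      have t1: "br (br (pp c y) (pp d u)) a \<in> gen br S X"
      proof (cases "q = 0")
        case True then show ?thesis using w gbr(2) by simp
      next
        case False
        then have "0 \<le> -1 + q" using gbr(4) by simp
        then show ?thesis using gen.gbr[OF gbr(1) w] by simp
      qed
      have ih: "br (pp c y) a \<in> gen br S X" using gbr(2) yc by blast
      have t2: "br (pp d u) (br (pp c y) a) \<in> gen br S X" by (rule gen.gbr[OF ih ud gbr(4)])
      show ?thesis unfolding j by (rule gen.gadd[OF t1 gen.gscale[OF t2]])
    qed
    have "br y (br u a) = br (pp False y) (br (pp False u) a) + br (pp False y) (br (pp True u) a)
        + (br (pp True y) (br (pp False u) a) + br (pp True y) (br (pp True u) a))"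
      using br_splitL[of y "br u a"] br_splitL[of u a] by (simp add: br_addR)
    then show "br y (br u a) \<in> gen br S X" using hom by (simp add: gen.gadd)
  qed
qed

lemma gen_br:
  assumes H1: "\<forall>x\<in>X. \<forall>y\<in>S (-1). br y x \<in> gen br S X" and a: "a \<in> gen br S X"
  shows "br x a \<in> gen br S X"
proof -
  have "br x a = (\<Sum>q\<in>PP. br (zproj S q x) a)" using br_sumL[of "\<lambda>q. zproj S q x" PP a] by (simp add: zp_sum)
  also have "\<dots> \<in> gen br S X"
  proof (rule gen_sum)
    fix q :: int
    consider "0 \<le> q" | "q = -1" | "q < -1" by atomize_elim linarith
    then show "br (zproj S q x) a \<in> gen br S X"
    proof cases
      case 1 then show ?thesis using gen.gbr[OF a zp_in] by blast
    next
      case 2 then show ?thesis using gen_m1[OF H1 a] zp_in by blast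
    next
      case 3 then show ?thesis using zp_low by (simp add: gen.gzero)
    qed
  qed
  finally show ?thesis .
qed

lemma gen_par:
  assumes H2: "\<forall>x\<in>X. \<forall>b. pp b x \<in> gen br S X"
  shows "a \<in> gen br S X \<Longrightarrow> \<forall>b. pp b a \<in> gen br S X"
proof (induct a rule: gen.induct)
  case (gbase x) then show ?case using H2 by blast
next
  case gzero then show ?case by (simp add: par_0 gen.gzero)
next
  case (gadd a b) then show ?case by (simp add: par_add gen.gadd)
next
  case (gscale a c) then show ?case by (simp add: par_scale gen.gscale)
next
  case (gbr a u q)
  have one: "pp b (br (pp c u) (pp d a)) \<in> gen br S X" for b c d
  proof -
    have ih: "pp d a \<in> gen br S X" using gbr(2) by blast
    have t: "br (pp c u) (pp d a) \<in> gen br S X" by (rule gen.gbr[OF ih S_par[OF gbr(3)] gbr(4)])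
    have v: "br (pp c u) (pp d a) \<in> V (c \<noteq> d)" by (rule br_par[OF par_in par_in])
    show ?thesis
    proof (cases "(c \<noteq> d) = b")
      case True then show ?thesis using par_id[OF v] t by simp
    next
      case False
      then have "br (pp c u) (pp d a) \<in> V (\<not> b)" using v by (cases b) auto
      then show ?thesis using par_zero' by (simp add: gen.gzero)
    qed
  qed
  show ?case using one br_split[of u a] by (simp add: par_add gen.gadd)
qed

lemma gen_ideal:
  assumes H1: "\<forall>x\<in>X. \<forall>y\<in>S (-1). br y x \<in> gen br S X"
    and H2: "\<forall>x\<in>X. \<forall>b. pp b x \<in> gen br S X"
  shows "graded_ideal br V (gen br S X)"
  unfolding graded_ideal_def csubspace_def
proof (intro conjI ballI allI)
  show "0 \<in> gen br S X" by (rule gen.gzero)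
  show "x + y \<in> gen br S X" if "x \<in> gen br S X" "y \<in> gen br S X" for x y by (rule gen.gadd[OF that])
  show "c *\<^sub>C x \<in> gen br S X" if "x \<in> gen br S X" for c x by (rule gen.gscale[OF that])
  show "pp b x \<in> gen br S X" if "x \<in> gen br S X" for x b using gen_par[OF H2 that] by (rule spec)
  show "br x y \<in> gen br S X" if "y \<in> gen br S X" for x y by (rule gen_br[OF H1 that])
qed

lemma gen_proj:
  assumes Y: "csubspace Y" and hX: "\<forall>x\<in>X. zproj S (-1) x \<in> Y"
    and inv: "\<forall>u\<in>S 0. \<forall>y\<in>Y. br u y \<in> Y"
  shows "a \<in> gen br S X \<Longrightarrow> zproj S (-1) a \<in> Y"
proof (induct a rule: gen.induct)
  case (gbase x) then show ?case using hX by blast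
next
  case gzero then show ?case using Y by (simp add: zp_0 csub_0)
next
  case (gadd a b) then show ?case using Y by (simp add: zp_add csub_add)
next
  case (gscale a c) then show ?case using Y by (simp add: zp_scale csub_scale)
next
  case (gbr a u q)
  have e: "zproj S (-1) (br u a) = br u (zproj S (-1 - q) a)" by (rule zp_brL[OF gbr(3)])
  show ?case
  proof (cases "q = 0")
    case True then show ?thesis using e inv gbr by simp
  next
    case False
    then have "-1 - q < -1" using gbr(4) by simp
    then show ?thesis using e zp_low Y by (simp add: csub_0)
  qed
qed

lemma Sm1_ex: obtains w where "w \<in> S (-1)" "w \<noteq> 0"
  using Sm1 S0 by blast

lemma trans_s: assumes p: "0 \<le> p" and z: "z \<in> S p" and k: "\<forall>y\<in>S (-1). br y z = 0"
  shows "z = 0"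
proof -
  define X where "X = {pp False z, pp True z}"
  have kc: "br y (pp c z) = 0" if y: "y \<in> S (-1)" for y c
  proof -
    have hd: "br (pp d y) (pp c z) = 0" for d
    proof -
      have "br (pp d y) (pp False z) + br (pp d y) (pp True z) = 0"
        using k S_par[OF y] br_splitR[of "pp d y" z] by simp
      moreover have "br (pp d y) (pp False z) \<in> V (d \<noteq> False)" by (rule br_par[OF par_in par_in])
      moreover have "br (pp d y) (pp True z) \<in> V (\<not> (d \<noteq> False))" using br_par[OF par_in par_in, of d y True z] by simp
      ultimately have "br (pp d y) (pp False z) = 0 \<and> br (pp d y) (pp True z) = 0" by (rule disj_sum)
      then show ?thesis by (cases c) auto
    qed
    show ?thesis using br_splitL[of y "pp c z"] hd by simp
  qed
  have H1: "\<forall>x\<in>X. \<forall>y\<in>S (-1). br y x \<in> gen br S X"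
  proof (intro ballI)
    fix x y assume "x \<in> X" "y \<in> S (-1)"
    moreover obtain c where "x = pp c z" using \<open>x \<in> X\<close> unfolding X_def by auto
    ultimately show "br y x \<in> gen br S X" using kc gen.gzero by simp
  qed
  have ppc: "pp b (pp c z) \<in> gen br S X" for b c
  proof (cases "b = c")
    case True
    have m: "pp c z \<in> X" unfolding X_def by (cases c) auto
    show ?thesis using True par_id[OF par_in, of c z] gen.gbase[OF m] by simp
  next
    case False then have "pp c z \<in> V (\<not> b)" using par_in by (cases b) auto
    then show ?thesis using par_zero' gen.gzero by simp
  qed
  have H2: "\<forall>x\<in>X. \<forall>b. pp b x \<in> gen br S X"
  proof (intro ballI allI)
    fix x b assume "x \<in> X"
    then obtain c where "x = pp c z" unfolding X_def by auto
    then show "pp b x \<in> gen br S X" using ppc by simp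
  qed
  have gi: "gen br S X = {0} \<or> gen br S X = UNIV" using simple_ideal[OF gen_ideal[OF H1 H2]] .
  have "gen br S X \<noteq> UNIV"
  proof
    assume U: "gen br S X = UNIV"
    obtain w where w: "w \<in> S (-1)" "w \<noteq> 0" using Sm1_ex by blast
    have Y: "csubspace {0::'a}" unfolding csubspace_def by simp
    have hX: "\<forall>x\<in>X. zproj S (-1) x \<in> {0}"
      unfolding X_def using zp_par zp_other[OF z] p by (simp add: par_0)
    have "zproj S (-1) w \<in> {0}" using gen_proj[OF Y hX] U by simp
    then show False using zp_same[OF w(1)] w(2) by simp
  qed
  then have "gen br S X = {0}" using gi by blast
  then have "pp False z = 0" "pp True z = 0" using gen.gbase X_def by blast+
  then show ?thesis using par_sum[of z] by simp
qed

lemma irr_core: assumes Wsub: "W \<subseteq> S (-1)" and Wcs: "csubspace W"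
  and Wpar: "\<forall>y\<in>W. \<forall>b. pp b y \<in> W" and Winv: "\<forall>u\<in>S 0. \<forall>y\<in>W. br u y \<in> W"
  shows "W = {0} \<or> W = S (-1)"
proof -
  have H1: "\<forall>x\<in>W. \<forall>y\<in>S (-1). br y x \<in> gen br S W"
  proof (intro ballI)
    fix x y assume "x \<in> W" "y \<in> S (-1)"
    then have "br y x \<in> S (-1 + -1)" using Wsub br_grade[of y "-1" x "-1"] by blast
    then show "br y x \<in> gen br S W" using Slow[of "-2" "br y x"] by (simp add: gen.gzero)
  qed
  have H2: "\<forall>x\<in>W. \<forall>b. pp b x \<in> gen br S W" using Wpar gen.gbase by blast
  have gi: "gen br S W = {0} \<or> gen br S W = UNIV" using simple_ideal[OF gen_ideal[OF H1 H2]] .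
  then show ?thesis
  proof
    assume "gen br S W = {0}"
    then have "W \<subseteq> {0}" using gen.gbase by blast
    then show ?thesis using csub_0[OF Wcs] by blast
  next
    assume U: "gen br S W = UNIV"
    have hX: "\<forall>x\<in>W. zproj S (-1) x \<in> W" using Wsub zp_same by auto
    have "S (-1) \<subseteq> W"
    proof
      fix w assume "w \<in> S (-1)"
      then show "w \<in> W" using gen_proj[OF Wcs hX Winv, of w] U zp_same by simp
    qed
    then show ?thesis using Wsub by blast
  qed
qed


lemma br0fun: "br 0 = (\<lambda>_. 0)" by (rule ext) simp

lemma kill_split: assumes h0: "sder br V False D0" and h1: "sder br V True D1"
  and Tpar: "\<forall>z\<in>T. \<forall>b. pp b z \<in> T" and k: "\<forall>z\<in>T. D0 z + D1 z = 0" and z: "z \<in> T"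
  shows "D0 z = 0 \<and> D1 z = 0"
proof -
  have c: "D0 (pp c z) = 0 \<and> D1 (pp c z) = 0" for c
  proof -
    have "D0 (pp c z) + D1 (pp c z) = 0" using k Tpar z by blast
    moreover have "D0 (pp c z) \<in> V c" using sder_par[OF h0 par_in, of c z] by simp
    moreover have "D1 (pp c z) \<in> V (\<not> c)" using sder_par[OF h1 par_in, of c z] by simp
    ultimately show ?thesis by (rule disj_sum)
  qed
  have "D0 z = D0 (pp False z) + D0 (pp True z)"
    using clin_add[OF sder_clin[OF h0], of "pp False z" "pp True z"] by (simp only: par_sum)
  moreover have "D1 z = D1 (pp False z) + D1 (pp True z)"
    using clin_add[OF sder_clin[OF h1], of "pp False z" "pp True z"] by (simp only: par_sum)
  ultimately show ?thesis using c by simp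
qed

lemma S1_ne: "S 1 \<noteq> {0}"
proof
  assume S1: "S 1 = {0}"
  have hi: "\<forall>z\<in>S p. z = 0" if "1 \<le> p" for p
    using that
  proof (induct p rule: int_ge_induct)
    case base then show ?case using S1 by blast
  next
    case (step p)
    show ?case
    proof
      fix z assume z: "z \<in> S (p + 1)"
      have "\<forall>y\<in>S (-1). br y z = 0"
      proof
        fix y assume "y \<in> S (-1)"
        then have "br y z \<in> S (-1 + (p + 1))" using br_grade z by blast
        then show "br y z = 0" using step by simp
      qed
      then show "z = 0" using trans_s[OF _ z] step by simp
    qed
  qed
  have "graded_ideal br V (S (-1))"
    unfolding graded_ideal_def
  proof (intro conjI ballI allI)
    show "csubspace (S (-1))" by (rule Ssub)
    show "pp b x \<in> S (-1)" if "x \<in> S (-1)" for x b using S_par that by blast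
    show "br x y \<in> S (-1)" if y: "y \<in> S (-1)" for x y
    proof -
      have "br x y = (\<Sum>q\<in>PP. br (zproj S q x) y)" using br_sumL[of "\<lambda>q. zproj S q x" PP y] by (simp add: zp_sum)
      also have "\<dots> \<in> S (-1)"
      proof (rule csub_sum[OF Ssub])
        fix q :: int
        have g: "br (zproj S q x) y \<in> S (q + -1)" using br_grade[OF zp_in y] .
        consider "q = 0" | "1 \<le> q" | "q \<le> -1" by atomize_elim linarith
        then show "br (zproj S q x) y \<in> S (-1)"
        proof cases
          case 1 then show ?thesis using g by simp
        next
          case 2 then have "zproj S q x = 0" using hi zp_in by blast
          then show ?thesis using S0 by simp
        next
          case 3 then have "q + -1 < -1" by simp
          then have "br (zproj S q x) y = 0" using Slow[OF _ g] by blast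
          then show ?thesis using S0 by simp
        qed
      qed
      finally show ?thesis .
    qed
  qed
  then have "S (-1) = {0} \<or> S (-1) = UNIV" by (rule simple_ideal)
  then have "S (-1) = UNIV" using Sm1 by blast
  then have "br x y = 0" for x y using br_grade[of x "-1" y "-1"] Slow[of "-2" "br x y"] by simp
  then show False using nonab by blast
qed

end

locale LG = LS br V S for br :: "'a::cvec \<Rightarrow> 'a \<Rightarrow> 'a" and V S +
  fixes Out G :: "('a \<Rightarrow> 'a) set"
  assumes oc: "out_complement br V S Out" and rG: "range br \<subseteq> G" and Gder: "G \<subseteq> der br V"
    and Gsub: "subalg_der V G" and Ggr: "graded_sub V S G"
begin

lemma G_fs: "fsubspace G" using Gsub unfolding subalg_der_def by (elim conjE) assumption
lemma G0: "(\<lambda>_. 0) \<in> G" using G_fs unfolding fsubspace_def by (elim conjE) assumption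
lemma G_add: assumes "D \<in> G" "E \<in> G" shows "(\<lambda>x. D x + E x) \<in> G"
proof -
  have H: "\<forall>D\<in>G. \<forall>E\<in>G. (\<lambda>x. D x + E x) \<in> G" using G_fs unfolding fsubspace_def by (elim conjE) assumption
  show ?thesis using H assms by blast
qed
lemma G_scale: assumes "D \<in> G" shows "(\<lambda>x. c *\<^sub>C D x) \<in> G"
proof -
  have H: "\<forall>c. \<forall>D\<in>G. (\<lambda>x. c *\<^sub>C D x) \<in> G" using G_fs unfolding fsubspace_def by (elim conjE) assumption
  show ?thesis using H assms by blast
qed
lemma ad_G: "br x \<in> G" using rG by blast
lemma Out_der: "Out \<subseteq> der br V" using oc unfolding out_complement_def by (elim conjE) assumption
lemma Out_sub: "subalg_der V Out" using oc unfolding out_complement_def by (elim conjE) assumption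
lemma Out_gr: "graded_sub V S Out" using oc unfolding out_complement_def by (elim conjE) assumption
lemma Out_dec: assumes "D \<in> der br V" shows "\<exists>x. \<exists>E\<in>Out. D = (\<lambda>y. br x y + E y)"
proof -
  have H: "\<forall>D\<in>der br V. \<exists>x. \<exists>E\<in>Out. D = (\<lambda>y. br x y + E y)" using oc unfolding out_complement_def by (elim conjE) assumption
  show ?thesis using H assms by blast
qed
lemma Out_inner: assumes "br x \<in> Out" shows "br x = (\<lambda>_. 0)"
proof -
  have H: "\<forall>x. br x \<in> Out \<longrightarrow> br x = (\<lambda>_. 0)" using oc unfolding out_complement_def by (elim conjE) assumption
  show ?thesis using H[rule_format, OF assms] .
qed
lemma Out0: "(\<lambda>_. 0) \<in> Out" using Out_sub unfolding subalg_der_def fsubspace_def by (elim conjE) assumption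
lemma zero_der: "(\<lambda>_. 0) \<in> der br V" using Out0 Out_der by blast
lemma zero_deg: "(\<lambda>_. 0) \<in> der_deg br V S k" unfolding der_deg_def using zero_der S0 by auto
lemma zero_gdeg: "(\<lambda>_. 0) \<in> gdeg br V S G k" unfolding gdeg_def using zero_deg G0 by auto
lemma ad_deg: assumes "x \<in> S k" shows "br x \<in> der_deg br V S k"
  unfolding der_deg_def
proof (intro CollectI conjI allI subsetI)
  show "br x \<in> der br V" by (rule ad_der)
  fix p z assume "z \<in> br x ` S p"
  then obtain y where y: "y \<in> S p" "z = br x y" by blast
  have "br x y \<in> S (k + p)" by (rule br_grade[OF assms y(1)])
  then show "z \<in> S (p + k)" using y(2) by (simp add: add.commute)
qed
lemma ad_gdeg: "x \<in> S k \<Longrightarrow> br x \<in> gdeg br V S G k" unfolding gdeg_def using ad_deg ad_G by blast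

lemma part1: "G = {(\<lambda>y. br x y + E y) | x E. E \<in> G \<inter> Out}"
proof
  show "G \<subseteq> {(\<lambda>y. br x y + E y) | x E. E \<in> G \<inter> Out}"
  proof
    fix D assume D: "D \<in> G"
    obtain x E where E: "E \<in> Out" "D = (\<lambda>y. br x y + E y)" using Out_dec D Gder by blast
    have "(\<lambda>y. D y + (-1) *\<^sub>C br x y) \<in> G" using G_add[OF D G_scale[OF ad_G]] by simp
    moreover have "(\<lambda>y. D y + (-1) *\<^sub>C br x y) = E" using E(2) by (simp add: cscale_m1)
    ultimately have EG: "E \<in> G" by simp
    show "D \<in> {(\<lambda>y. br x y + E y) | x E. E \<in> G \<inter> Out}"
      unfolding E(2) by (intro CollectI exI[of _ x] exI[of _ E] conjI) (simp_all add: EG E(1))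
  qed
  show "{(\<lambda>y. br x y + E y) | x E. E \<in> G \<inter> Out} \<subseteq> G" using G_add ad_G by blast
qed

lemma part_sub: "subalg_der V (G \<inter> Out)"
  using Gsub Out_sub unfolding subalg_der_def fsubspace_def by blast
lemma part_gr: "graded_sub V S (G \<inter> Out)"
  using Ggr Out_gr unfolding graded_sub_def by blast

lemma transG: "transitive_g br V S G"
  unfolding transitive_g_def
proof (intro allI impI ballI)
  fix p D
  assume p: "0 \<le> p" and D: "D \<in> gdeg br V S G p"
    and hyp: "\<forall>E\<in>gdeg br V S G (-1). dbr V D E = (\<lambda>_. 0)"
  have Dder: "D \<in> der br V" and Dmap: "\<And>q. D ` S q \<subseteq> S (q + p)"
    using D unfolding gdeg_def der_deg_def by auto
  obtain D0 D1 where h: "sder br V False D0" "sder br V True D1" "D = (\<lambda>x. D0 x + D1 x)"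
    using der_obtain[OF Dder] by blast
  define Dc where "Dc a = (if a then D1 else D0)" for a
  have sdc: "sder br V a (Dc a)" for a using h unfolding Dc_def by (cases a) auto
  have k1: "D y = 0" if y: "y \<in> S (-1)" for y
  proof -
    have "dbr V D (br y) = (\<lambda>_. 0)" using hyp ad_gdeg[OF y] by blast
    then have "br (D y) = (\<lambda>_. 0)" using dbr_ad[OF Dder] by simp
    then show ?thesis by (rule center')
  qed
  have killc: "Dc a z = 0" if T: "\<forall>z\<in>S q. D z = 0" and z: "z \<in> S q" for a q z
  proof -
    have "D0 z = 0 \<and> D1 z = 0"
      by (rule kill_split[OF h(1,2), of "S q"]) (use S_par T h(3) z in auto)
    then show ?thesis unfolding Dc_def by simp
  qed
  have step: "\<forall>x\<in>S q. D x = 0" if "-1 \<le> q" for q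
    using that
  proof (induct q rule: int_ge_induct)
    case base then show ?case using k1 by blast
  next
    case (step q)
    show ?case
    proof
      fix x assume x: "x \<in> S (q + 1)"
      have hom: "br (pp d y) (Dc a x) = 0" if y: "y \<in> S (-1)" for y a d
      proof -
        have yd: "pp d y \<in> S (-1)" using S_par[OF y] .
        have "br (pp d y) x \<in> S (-1 + (q + 1))" using br_grade[OF yd x] .
        then have l: "Dc a (br (pp d y) x) = 0" using killc[OF step(2)] by simp
        have r: "Dc a (pp d y) = 0" using killc[OF _ yd] k1 by blast
        have "Dc a (br (pp d y) x) = br (Dc a (pp d y)) x + psgn a d *\<^sub>C br (pp d y) (Dc a x)"
          by (rule sder_rule[OF sdc par_in])
        then have "psgn a d *\<^sub>C br (pp d y) (Dc a x) = 0" using l r by simp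
        then show ?thesis by (rule psgn_cancel)
      qed
      have kk: "\<forall>y\<in>S (-1). br y (D x) = 0"
      proof
        fix y assume y: "y \<in> S (-1)"
        have "br y (D x) = br (pp False y) (Dc False x) + br (pp False y) (Dc True x)
          + (br (pp True y) (Dc False x) + br (pp True y) (Dc True x))"
          using br_splitL[of y "D x"] h(3) unfolding Dc_def by (simp add: br_addR)
        then show "br y (D x) = 0" using hom[OF y] by simp
      qed
      have mm: "D x \<in> S (q + 1 + p)" using Dmap x by blast
      have "0 \<le> q + 1 + p" using step(1) p by simp
      then show "D x = 0" by (rule trans_s[OF _ mm kk])
    qed
  qed
  show "D = (\<lambda>_. 0)"
  proof
    fix x
    have "D x = (\<Sum>q\<in>PP. D (zproj S q x))" using clin_sum[OF der_clin[OF Dder]] zp_sum by metis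
    also have "\<dots> = 0"
    proof (rule sum.neutral, rule ballI)
      fix q :: int
      show "D (zproj S q x) = 0"
      proof (cases "-1 \<le> q")
        case True then show ?thesis using step zp_in by blast
      next
        case False then show ?thesis using zp_low clin_0[OF der_clin[OF Dder]] by simp
      qed
    qed
    finally show "D x = 0" .
  qed
qed

lemma nonlinG: "nonlinear_g br V S G"
proof -
  obtain x where x: "x \<in> S 1" "x \<noteq> 0" using S1_ne S0 by blast
  have "br x \<in> gdeg br V S G 1" by (rule ad_gdeg[OF x(1)])
  moreover have "br x \<noteq> (\<lambda>_. 0)" using center' x(2) by blast
  ultimately show ?thesis unfolding nonlinear_g_def by blast
qed


lemma gdeg_m1_ne: "gdeg br V S G (-1) \<noteq> {\<lambda>_. 0}"
proof -
  obtain w where w: "w \<in> S (-1)" "w \<noteq> 0" using Sm1_ex by blast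
  have "br w \<in> gdeg br V S G (-1)" by (rule ad_gdeg[OF w(1)])
  moreover have "br w \<noteq> (\<lambda>_. 0)" using center' w(2) by blast
  ultimately show ?thesis by blast
qed

lemma dec:
  assumes noneg: "\<forall>p<0. (G \<inter> Out) \<inter> der_deg br V S p = {\<lambda>_. 0}" and p: "p < 0"
    and D: "D \<in> gdeg br V S G p"
  shows "\<exists>x\<in>S p. D = br x"
proof -
  have DG: "D \<in> G" and Dder: "D \<in> der br V" and Dmap: "\<And>q. D ` S q \<subseteq> S (q + p)"
    using D unfolding gdeg_def der_deg_def by auto
  obtain x E where E: "E \<in> Out" "D = (\<lambda>y. br x y + E y)" using Out_dec Dder by blast
  have Ee: "E = (\<lambda>y. D y + (-1) *\<^sub>C br x y)" using E(2) by (simp add: cscale_m1)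
  have EG: "E \<in> G" unfolding Ee using G_add[OF DG G_scale[OF ad_G]] by simp
  define E' where "E' = dcomp S p E"
  have E'GO: "E' \<in> G \<inter> Out" unfolding E'_def using Ggr Out_gr EG E(1) unfolding graded_sub_def by blast
  let ?xp = "zproj S p x"
  have lin: "clinear_map D" by (rule der_clin[OF Dder])
  have E'e: "E' = (\<lambda>y. D y + (-1) *\<^sub>C br ?xp y)"
  proof
    fix y
    have "E' y = (\<Sum>r\<in>PP. zproj S (r + p) (D (zproj S r y)) + (-1) *\<^sub>C zproj S (r + p) (br x (zproj S r y)))"
      unfolding E'_def dcomp_def Ee by (simp add: zp_add zp_scale PP_def)
    also have "\<dots> = (\<Sum>r\<in>PP. D (zproj S r y) + (-1) *\<^sub>C br ?xp (zproj S r y))"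
    proof (rule sum.cong[OF refl])
      fix r
      have "D (zproj S r y) \<in> S (r + p)" using Dmap zp_in by blast
      then have a: "zproj S (r + p) (D (zproj S r y)) = D (zproj S r y)" by (rule zp_same)
      have b: "zproj S (r + p) (br x (zproj S r y)) = br ?xp (zproj S r y)"
        using zp_brR[OF zp_in[of r y], where r="r + p" and a=x] by simp
      show "zproj S (r + p) (D (zproj S r y)) + (-1) *\<^sub>C zproj S (r + p) (br x (zproj S r y))
          = D (zproj S r y) + (-1) *\<^sub>C br ?xp (zproj S r y)" using a b by simp
    qed
    also have "\<dots> = (\<Sum>r\<in>PP. D (zproj S r y)) + (-1) *\<^sub>C (\<Sum>r\<in>PP. br ?xp (zproj S r y))"
      by (simp add: sum.distrib cscale_sum)
    also have "\<dots> = D y + (-1) *\<^sub>C br ?xp y"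
      using clin_sum[OF lin, of "\<lambda>r. zproj S r y" PP] br_sumR[of ?xp "\<lambda>r. zproj S r y" PP]
      by (simp add: zp_sum)
    finally show "E' y = D y + (-1) *\<^sub>C br ?xp y" .
  qed
  have "E' \<in> der_deg br V S p"
    unfolding der_deg_def
  proof (intro CollectI conjI allI subsetI)
    show "E' \<in> der br V" using E'GO Out_der by blast
    fix q z assume "z \<in> E' ` S q"
    then obtain y where y: "y \<in> S q" "z = E' y" by blast
    have "D y \<in> S (q + p)" using Dmap y(1) by blast
    moreover have "br ?xp y \<in> S (q + p)" using br_grade[OF zp_in y(1)] by (simp add: add.commute)
    ultimately have "D y + (-1) *\<^sub>C br ?xp y \<in> S (q + p)" by (intro csub_add[OF Ssub] csub_scale[OF Ssub])
    then show "z \<in> S (q + p)" using y(2) E'e by simp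
  qed
  then have "E' = (\<lambda>_. 0)" using noneg p E'GO by blast
  then have "D = br ?xp"
  proof -
    assume z: "E' = (\<lambda>_. 0)"
    show ?thesis
    proof
      fix y
      have "D y + (-1) *\<^sub>C br ?xp y = 0" using z E'e by metis
      then show "D y = br ?xp y" by (simp add: cscale_m1)
    qed
  qed
  then show ?thesis using zp_in by blast
qed

lemma adW:
  shows "br ` S (-1) \<subseteq> gdeg br V S G (-1)" and "fsubspace (br ` S (-1))"
    and "\<forall>D\<in>br ` S (-1). \<forall>b. dpar V b D \<in> br ` S (-1)"
    and "\<forall>X\<in>gdeg br V S G 0. \<forall>D\<in>br ` S (-1). dbr V X D \<in> br ` S (-1)"
proof -
  show "br ` S (-1) \<subseteq> gdeg br V S G (-1)" using ad_gdeg by blast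
  show "fsubspace (br ` S (-1))"
    unfolding fsubspace_def
  proof (intro conjI ballI allI)
    have "br 0 \<in> br ` S (-1)" using S0 by (rule imageI)
    then show "(\<lambda>_. 0) \<in> br ` S (-1)" by (simp only: br0fun)
    fix D E assume "D \<in> br ` S (-1)" "E \<in> br ` S (-1)"
    then obtain y z where "y \<in> S (-1)" "z \<in> S (-1)" "D = br y" "E = br z" by blast
    moreover have "(\<lambda>x. br y x + br z x) = br (y + z)" by (rule ext) (simp add: br_addL)
    moreover have "y + z \<in> S (-1)" using csub_add[OF Ssub] calculation(1,2) .
    ultimately show "(\<lambda>x. D x + E x) \<in> br ` S (-1)" by simp
  next
    fix c D assume "D \<in> br ` S (-1)"
    then obtain y where "y \<in> S (-1)" "D = br y" by blast
    moreover have "(\<lambda>x. c *\<^sub>C br y x) = br (c *\<^sub>C y)" by (rule ext) (simp add: br_scaleL)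
    moreover have "c *\<^sub>C y \<in> S (-1)" using csub_scale[OF Ssub] calculation(1) .
    ultimately show "(\<lambda>x. c *\<^sub>C D x) \<in> br ` S (-1)" by simp
  qed
  show "\<forall>D\<in>br ` S (-1). \<forall>b. dpar V b D \<in> br ` S (-1)"
    using dpar_ad S_par by auto
  show "\<forall>X\<in>gdeg br V S G 0. \<forall>D\<in>br ` S (-1). dbr V X D \<in> br ` S (-1)"
  proof (intro ballI)
    fix X D assume X: "X \<in> gdeg br V S G 0" and "D \<in> br ` S (-1)"
    then obtain y where y: "y \<in> S (-1)" "D = br y" by blast
    have "X \<in> der br V" "X ` S (-1) \<subseteq> S (-1 + 0)" using X unfolding gdeg_def der_deg_def by auto
    then show "dbr V X D \<in> br ` S (-1)" using y dbr_ad by auto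
  qed
qed

lemma iff_fwd:
  assumes "depth_one_g br V S G" "irreducible_g br V S G"
  shows "\<forall>p<0. (G \<inter> Out) \<inter> der_deg br V S p = {\<lambda>_. 0}"
proof (intro allI impI)
  fix p :: int assume p: "p < 0"
  show "(G \<inter> Out) \<inter> der_deg br V S p = {\<lambda>_. 0}"
  proof
    show "{\<lambda>_. 0} \<subseteq> (G \<inter> Out) \<inter> der_deg br V S p" using G0 Out0 zero_deg by blast
    show "(G \<inter> Out) \<inter> der_deg br V S p \<subseteq> {\<lambda>_. 0}"
    proof
      fix E assume E: "E \<in> (G \<inter> Out) \<inter> der_deg br V S p"
      then have Eg: "E \<in> gdeg br V S G p" unfolding gdeg_def by blast
      show "E \<in> {\<lambda>_. 0}"
      proof (cases "p < -1")
        case True then show ?thesis using assms(1) Eg unfolding depth_one_g_def by blast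
      next
        case False
        then have pm: "p = -1" using p by simp
        have W: "br ` S (-1) = {\<lambda>_. 0} \<or> br ` S (-1) = gdeg br V S G (-1)"
          using assms(2) adW unfolding irreducible_g_def by blast
        obtain w where w: "w \<in> S (-1)" "w \<noteq> 0" using Sm1_ex by blast
        have "br w \<noteq> (\<lambda>_. 0)" using center' w(2) by blast
        then have "br ` S (-1) \<noteq> {\<lambda>_. 0}" using w(1) by blast
        then have "br ` S (-1) = gdeg br V S G (-1)" using W by blast
        then obtain y where "E = br y" using Eg pm by auto
        then show ?thesis using Out_inner E by auto
      qed
    qed
  qed
qed

lemma iff_bwd:
  assumes noneg: "\<forall>p<0. (G \<inter> Out) \<inter> der_deg br V S p = {\<lambda>_. 0}"
  shows "depth_one_g br V S G \<and> irreducible_g br V S G"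
proof
  show "depth_one_g br V S G"
    unfolding depth_one_g_def
  proof (intro conjI allI impI)
    show "gdeg br V S G (-1) \<noteq> {\<lambda>_. 0}" by (rule gdeg_m1_ne)
    fix p :: int assume p: "p < -1"
    show "gdeg br V S G p = {\<lambda>_. 0}"
    proof
      show "{\<lambda>_. 0} \<subseteq> gdeg br V S G p" using zero_gdeg by blast
      show "gdeg br V S G p \<subseteq> {\<lambda>_. 0}"
      proof
        fix D assume DD: "D \<in> gdeg br V S G p"
        have "p < 0" using p by simp
        then have "\<exists>x\<in>S p. D = br x" by (rule dec[OF noneg _ DD])
        then obtain x where "x \<in> S p" "D = br x" by blast
        then have "x = 0" "D = br x" using Slow[OF p] by blast+
        then show "D \<in> {\<lambda>_. 0}" using br0fun by simp
      qed
    qed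
  qed
  show "irreducible_g br V S G"
    unfolding irreducible_g_def
  proof (intro conjI allI impI)
    show "gdeg br V S G (-1) \<noteq> {\<lambda>_. 0}" by (rule gdeg_m1_ne)
    fix W assume A: "W \<subseteq> gdeg br V S G (-1) \<and> fsubspace W \<and> (\<forall>D\<in>W. \<forall>b. dpar V b D \<in> W) \<and>
        (\<forall>X\<in>gdeg br V S G 0. \<forall>D\<in>W. dbr V X D \<in> W)"
    have Wfs: "fsubspace W" using A by blast
    define W' where "W' = {y \<in> S (-1). br y \<in> W}"
    have W0: "(\<lambda>_. 0) \<in> W" using Wfs fsubspace_def by blast
    have decm1: "\<exists>y\<in>S (-1). D = br y" if "D \<in> W" for D
    proof -
      have DD: "D \<in> gdeg br V S G (-1)" using A that by blast
      show ?thesis by (rule dec[OF noneg _ DD]) simp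
    qed
    have Wsub: "W' \<subseteq> S (-1)" unfolding W'_def by blast
    have Wcs: "csubspace W'"
      unfolding csubspace_def
    proof (intro conjI ballI allI)
      show "0 \<in> W'" unfolding W'_def using S0 W0 br0fun by simp
      fix x y assume "x \<in> W'" "y \<in> W'"
      moreover have "br (x + y) = (\<lambda>z. br x z + br y z)" by (rule ext) (simp add: br_addL)
      ultimately show "x + y \<in> W'" unfolding W'_def using Wfs Ssub csub_add unfolding fsubspace_def by auto
    next
      fix c x assume "x \<in> W'"
      moreover have "br (c *\<^sub>C x) = (\<lambda>z. c *\<^sub>C br x z)" by (rule ext) (simp add: br_scaleL)
      ultimately show "c *\<^sub>C x \<in> W'" unfolding W'_def using Wfs Ssub csub_scale unfolding fsubspace_def by auto
    qed
    have Wpar: "\<forall>y\<in>W'. \<forall>b. pp b y \<in> W'"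
      unfolding W'_def using A dpar_ad S_par by fastforce
    have Winv: "\<forall>u\<in>S 0. \<forall>y\<in>W'. br u y \<in> W'"
    proof (intro ballI)
      fix u y assume u: "u \<in> S 0" and y: "y \<in> W'"
      have "dbr V (br u) (br y) \<in> W" using A ad_gdeg[OF u] y unfolding W'_def by blast
      then have "br (br u y) \<in> W" using dbr_ad[OF ad_der] by simp
      moreover have "br u y \<in> S (-1)" using br_grade[OF u, of y "-1"] y unfolding W'_def by simp
      ultimately show "br u y \<in> W'" unfolding W'_def by blast
    qed
    have "W' = {0} \<or> W' = S (-1)" by (rule irr_core[OF Wsub Wcs Wpar Winv])
    then show "W = {\<lambda>_. 0} \<or> W = gdeg br V S G (-1)"
    proof
      assume Z: "W' = {0}"
      have "W \<subseteq> {\<lambda>_. 0}"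
      proof
        fix D assume D: "D \<in> W"
        then obtain y where y: "y \<in> S (-1)" "D = br y" using decm1 by blast
        then have "y \<in> W'" unfolding W'_def using D by blast
        then show "D \<in> {\<lambda>_. 0}" using Z y br0fun by simp
      qed
      then show ?thesis using W0 by blast
    next
      assume F: "W' = S (-1)"
      have "gdeg br V S G (-1) \<subseteq> W"
      proof
        fix D assume DD: "D \<in> gdeg br V S G (-1)"
        have "\<exists>y\<in>S (-1). D = br y" by (rule dec[OF noneg _ DD]) simp
        then obtain y where y: "y \<in> S (-1)" "D = br y" by blast
        then show "D \<in> W" using F unfolding W'_def by blast
      qed
      then show ?thesis using A by blast
    qed
  qed
qed

lemma main:
  "G = {(\<lambda>y. br x y + E y) | x E. E \<in> G \<inter> Out}
    \<and> G \<inter> Out \<subseteq> Out \<and> subalg_der V (G \<inter> Out) \<and> graded_sub V S (G \<inter> Out)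
    \<and> transitive_g br V S G \<and> nonlinear_g br V S G
    \<and> ((depth_one_g br V S G \<and> irreducible_g br V S G) \<longleftrightarrow>
        (\<forall>p < 0. (G \<inter> Out) \<inter> der_deg br V S p = {\<lambda>_. 0}))"
  using part1 part_sub part_gr transG nonlinG iff_fwd iff_bwd by blast

end

theorem proposition3p11:
  fixes br :: "'a::cvec \<Rightarrow> 'a \<Rightarrow> 'a"
    and V :: "bool \<Rightarrow> 'a set" and S :: "int \<Rightarrow> 'a set"
    and Out G :: "('a \<Rightarrow> 'a) set"
  assumes "fin_dim_C (UNIV :: 'a set)"
    and "simple_lsa br V"
    and "z_grading br V S" and "depth_one S"
    and "out_complement br V S Out"
    and "range br \<subseteq> G" and "G \<subseteq> der br V"
    and "subalg_der V G" and "graded_sub V S G"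
  shows "G = {(\<lambda>y. br x y + E y) | x E. E \<in> G \<inter> Out}
    \<and> G \<inter> Out \<subseteq> Out \<and> subalg_der V (G \<inter> Out) \<and> graded_sub V S (G \<inter> Out)
    \<and> transitive_g br V S G \<and> nonlinear_g br V S G
    \<and> ((depth_one_g br V S G \<and> irreducible_g br V S G) \<longleftrightarrow>
        (\<forall>p < 0. (G \<inter> Out) \<inter> der_deg br V S p = {\<lambda>_. 0}))"
proof -
  have lsa: "lie_superalgebra br V" using assms(2) unfolding simple_lsa_def by (elim conjE) assumption
  interpret LG br V S Out G
    by (unfold_locales) (use assms lsa in auto)
  show ?thesis by (rule main)
qed

end
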